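(* Let $p$ be a prime and $G=Z_{p^{\lambda_1}}\times\cdots\times Z_{p^{\lambda_n}}$ with $\lambda_1\le\cdots\le\lambda_n$. Every type of $G$ is automorphic to a unique canonical type. Moreover, every canonical type is the maximum type in its automorphism class: if $\mathbf a$ is canonical, then $\mathbf a$ is the maximum element (for the componentwise order) of $\{\mathbf b\in\Lambda(G): T(\mathbf b)\subseteq O(\mathbf a)\}$.
   Context: Set $\lambda_0=0$. Tuples of integers are ordered componentwise: $\mathbf a\le\mathbf b$ iff $a_i\le b_i$ for all $i$. $\Lambda(G)=\{\mathbf a\in\mathbb Z^n:\mathbf 0\le\mathbf a\le(\lambda_1,\dots,\lambda_n)\}$. For $\mathbf a\in\Lambda(G)$, the type $T(\mathbf a)$ is the set of $(g_1,\dots,g_n)\in G$ with $|g_i|=p^{a_i}$ for all $i$; the types partition $G$. Two elements are automorphic if some automorphism of $G$ maps one to the other; each type lies in a single $\mathrm{Aut}(G)$-orbit, and two types are called automorphic if they lie in the same orbit. $O(\mathbf a)$ denotes the $\mathrm{Aut}(G)$-orbit (automorphism class) containing $T(\mathbf a)$. A tuple $\mathbf a\in\Lambda(G)$ (and the type $T(\mathbf a)$) is canonical if (I) $a_i\ge a_{i-1}$ for all $i\in\{2,\dots,n\}$ and (II) $a_{i+1}-a_i\le\lambda_{i+1}-\lambda_i$ for all $i\in\{1,\dots,n-1\}$. *)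

theory Defs
  imports "HOL-Algebra.Algebra"
begin

definition cyc :: "nat \<Rightarrow> (nat \<Rightarrow> nat) \<Rightarrow> nat \<Rightarrow> int monoid" where
  "cyc p lam i = integer_mod_group (p ^ lam i)"

definition pgrp :: "nat \<Rightarrow> nat \<Rightarrow> (nat \<Rightarrow> nat) \<Rightarrow> (nat \<Rightarrow> int) monoid" where
  "pgrp p n lam = product_group {1..n} (cyc p lam)"

definition Lam :: "nat \<Rightarrow> (nat \<Rightarrow> nat) \<Rightarrow> (nat \<Rightarrow> nat) set" where
  "Lam n lam = {a. (\<forall>i\<in>{1..n}. a i \<le> lam i) \<and> (\<forall>i. i \<notin> {1..n} \<longrightarrow> a i = 0)}"

definition tuple_le :: "nat \<Rightarrow> (nat \<Rightarrow> nat) \<Rightarrow> (nat \<Rightarrow> nat) \<Rightarrow> bool" where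
  "tuple_le n a b \<longleftrightarrow> (\<forall>i\<in>{1..n}. a i \<le> b i)"

definition gtype :: "nat \<Rightarrow> nat \<Rightarrow> (nat \<Rightarrow> nat) \<Rightarrow> (nat \<Rightarrow> nat) \<Rightarrow> (nat \<Rightarrow> int) set" where
  "gtype p n lam a = {g \<in> carrier (pgrp p n lam).
      \<forall>i\<in>{1..n}. group.ord (cyc p lam i) (g i) = p ^ a i}"

definition automorphic :: "('a, 'b) monoid_scheme \<Rightarrow> 'a \<Rightarrow> 'a \<Rightarrow> bool" where
  "automorphic G x y \<longleftrightarrow> (\<exists>\<phi>\<in>iso G G. \<phi> x = y)"

text \<open>O(a): the Aut(G)-orbit containing T(a) (union of the orbits of elements of T(a);
  these coincide since T(a) is nonempty and lies in a single orbit).\<close>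
definition orb :: "nat \<Rightarrow> nat \<Rightarrow> (nat \<Rightarrow> nat) \<Rightarrow> (nat \<Rightarrow> nat) \<Rightarrow> (nat \<Rightarrow> int) set" where
  "orb p n lam a = {y. \<exists>x\<in>gtype p n lam a. automorphic (pgrp p n lam) x y}"

definition types_automorphic :: "nat \<Rightarrow> nat \<Rightarrow> (nat \<Rightarrow> nat) \<Rightarrow> (nat \<Rightarrow> nat) \<Rightarrow> (nat \<Rightarrow> nat) \<Rightarrow> bool" where
  "types_automorphic p n lam a b \<longleftrightarrow>
     (\<exists>x\<in>gtype p n lam a. \<exists>y\<in>gtype p n lam b. automorphic (pgrp p n lam) x y)"

text \<open>Canonical tuples, with the convention lam 0 = 0 irrelevant here since (II) ranges over i>=1.\<close>
definition canonical :: "nat \<Rightarrow> (nat \<Rightarrow> nat) \<Rightarrow> (nat \<Rightarrow> nat) \<Rightarrow> bool" where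
  "canonical n lam a \<longleftrightarrow> a \<in> Lam n lam \<and>
     (\<forall>i\<in>{2..n}. a (i - 1) \<le> a i) \<and>
     (\<forall>i\<in>{1..<n}. int (a (i + 1)) - int (a i) \<le> int (lam (i + 1)) - int (lam i))"

end

theory Submission
  imports Defs "HOL-Computational_Algebra.Primes"
begin


lemma dvd_pow_mult:
  assumes "Factorial_Ring.prime p"
  shows "int p ^ L dvd int p ^ B * x \<longleftrightarrow> int p ^ (L-B) dvd x"
proof (cases "L \<le> B")
  case True
  then have "int p ^ L dvd int p ^ B" by (simp add: le_imp_power_dvd)
  then show ?thesis using True by simp
next
  case False
  then have "L = B + (L - B)" by simp
  then have "int p ^ L = int p ^ B * int p ^ (L-B)"
    by (metis power_add)
  moreover have "int p ^ B \<noteq> 0" using assms by (simp add: prime_gt_0_nat)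
  ultimately show ?thesis using prime_gt_0_nat[OF assms] by simp
qed

lemma A_fwd:
  assumes "Factorial_Ring.prime p" "e \<le> L" "\<forall>k::nat. int p ^ L dvd int k * x \<longleftrightarrow> p^e dvd k"
  shows "int p ^ (L-e) dvd x \<and> (0<e \<longrightarrow> \<not> int p ^ (L-e+1) dvd x)"
proof
  have "int p ^ L dvd int (p ^ e) * x" by (rule assms(3)[rule_format, THEN iffD2]) simp
  then have "int p ^ L dvd int p ^ e * x" by (simp only: of_nat_power)
  then show "int p ^ (L-e) dvd x" using dvd_pow_mult[OF assms(1), of L e x] by blast
  show "0<e \<longrightarrow> \<not> int p ^ (L-e+1) dvd x"
  proof
    assume "0 < e"
    show "\<not> int p ^ (L-e+1) dvd x"
    proof
      assume h: "int p ^ (L-e+1) dvd x"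
      have "L - (e-1) = L-e+1" using \<open>0<e\<close> assms(2) by auto
      then have "int p ^ L dvd int p ^ (e-1) * x" using dvd_pow_mult[OF assms(1), of L "e-1" x] h by simp
      then have "int p ^ L dvd int (p^(e-1)) * x" by (simp only: of_nat_power)
      then have "p^e dvd p^(e-1)" by (rule assms(3)[rule_format, THEN iffD1])
      moreover have "p^(e-1) < p^e" using \<open>0<e\<close> prime_gt_1_nat[OF assms(1)] by simp
      moreover have "0 < p^(e-1)" using prime_gt_0_nat[OF assms(1)] by simp
      ultimately show False by (simp add: nat_dvd_not_less)
    qed
  qed
qed

lemma A_back:
  assumes "Factorial_Ring.prime p" "e \<le> L" "int p ^ (L-e) dvd x" "0<e \<longrightarrow> \<not> int p ^ (L-e+1) dvd x"
  shows "int p ^ L dvd int k * x \<longleftrightarrow> p^e dvd k"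
proof (cases "e = 0")
  case True
  then show ?thesis using assms(3) by simp
next
  case False
  obtain u where u: "x = int p ^ (L-e) * u" using assms(3) by blast
  have "\<not> int p dvd u"
  proof
    assume "int p dvd u"
    then have "int p ^ (L-e+1) dvd x" using u mult_dvd_mono[of "int p ^ (L-e)" "int p ^ (L-e)" "int p" u] by simp
    then show False using assms(4) False by simp
  qed
  moreover have "Factorial_Ring.prime (int p)" using assms(1) by (simp add: prime_int_nat_transfer)
  ultimately have "coprime (int p) u" using prime_imp_coprime by blast
  then have cop: "coprime (int p ^ e) u" by simp
  have "L - (L - e) = e" using assms(2) by simp
  have "int p ^ L dvd int k * x \<longleftrightarrow> int p ^ L dvd int p ^ (L-e) * (int k * u)"
    using u by (simp add: ac_simps)
  also have "\<dots> \<longleftrightarrow> int p ^ e dvd int k * u"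
    using dvd_pow_mult[OF assms(1), of L "L-e" "int k * u"] \<open>L - (L - e) = e\<close> by simp
  also have "\<dots> \<longleftrightarrow> int p ^ e dvd int k" using cop coprime_dvd_mult_left_iff by blast
  also have "\<dots> \<longleftrightarrow> p^e dvd k" by (metis of_nat_dvd_iff of_nat_power)
  finally show ?thesis .
qed




locale pg =
  fixes p n :: nat and lam :: "nat \<Rightarrow> nat"
  assumes pp: "Factorial_Ring.prime p" and lm: "\<forall>i\<in>{2..n}. lam (i - 1) \<le> lam i"
begin

abbreviation "G \<equiv> pgrp p n lam"
abbreviation "M i \<equiv> int p ^ lam i"

lemma p_pos: "0 < p" using pp prime_gt_0_nat by auto
lemma p_gt1: "1 < p" using pp prime_gt_1_nat by auto
lemma M_pos: "0 < M i" using p_pos by simp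

lemma grpG: "group G" unfolding pgrp_def cyc_def by (rule product_group) simp

lemma carrG: "carrier G = (\<Pi>\<^sub>E i\<in>{1..n}. {0..<M i})"
  unfolding pgrp_def cyc_def using p_pos by (simp add: carrier_integer_mod_group)

lemma multG: "x \<otimes>\<^bsub>G\<^esub> y = (\<lambda>i\<in>{1..n}. (x i + y i) mod M i)"
  unfolding pgrp_def cyc_def by simp

lemma oneG: "\<one>\<^bsub>G\<^esub> = (\<lambda>i\<in>{1..n}. 0)"
  unfolding pgrp_def cyc_def by simp

lemma powG: "x [^]\<^bsub>G\<^esub> (k::nat) = (\<lambda>i\<in>{1..n}. (int k * x i) mod M i)"
proof (induction k)
  case 0
  then show ?case by (simp add: oneG)
next
  case (Suc k)
  show ?case unfolding nat_pow_Suc Suc multG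
    by (rule restrict_ext) (simp add: mod_add_right_eq distrib_right add.commute)
qed

lemma ord_cyc:
  assumes "z \<in> carrier (cyc p lam i)"
  shows "group.ord (cyc p lam i) z = d \<longleftrightarrow> (\<forall>k::nat. M i dvd int k * z \<longleftrightarrow> d dvd k)"
proof -
  have g: "group (cyc p lam i)" unfolding cyc_def by simp
  show ?thesis using group.ord_unique[OF g assms] unfolding cyc_def
    by (simp add: dvd_eq_mod_eq_0)
qed

lemma gtype_iff: "x \<in> gtype p n lam a \<longleftrightarrow>
   x \<in> carrier G \<and> (\<forall>i\<in>{1..n}. \<forall>k::nat. M i dvd int k * x i \<longleftrightarrow> p ^ a i dvd k)"
proof -
  have "x i \<in> carrier (cyc p lam i)" if "x \<in> carrier G" "i \<in> {1..n}" for i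
    using that unfolding pgrp_def by (auto simp: PiE_iff)
  then show ?thesis unfolding gtype_def using ord_cyc by auto
qed

lemma gtype_kill: "x \<in> gtype p n lam a \<Longrightarrow> i \<in> {1..n} \<Longrightarrow> M i dvd int p ^ a i * x i"
  unfolding gtype_iff by (metis dvd_refl of_nat_power)

lemma gtype_le:
  assumes "x \<in> gtype p n lam a" "i \<in> {1..n}" "M i dvd int p ^ b * x i"
  shows "a i \<le> b"
proof -
  have "M i dvd int (p ^ b) * x i \<longleftrightarrow> p ^ a i dvd p ^ b"
    using assms(1,2) unfolding gtype_iff by blast
  then have "p ^ a i dvd p ^ b" using assms(3) by simp
  then show ?thesis using p_gt1 dvd_power_iff_le[of p "a i" b] by simp
qed

end



context pg begin

definition closed :: "(nat \<Rightarrow> nat) \<Rightarrow> bool" where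
  "closed b \<longleftrightarrow> (\<forall>i\<in>{1..n}. \<forall>j\<in>{1..n}. b i \<le> b j + (lam i - lam j))"

definition Pr :: "(nat \<Rightarrow> nat) \<Rightarrow> (nat \<Rightarrow> int) \<Rightarrow> bool" where
  "Pr b x \<longleftrightarrow> x \<in> carrier G \<and> (\<forall>j\<in>{1..n}. \<exists>y\<in>carrier G. x [^]\<^bsub>G\<^esub> (p ^ b j) = y [^]\<^bsub>G\<^esub> (p ^ lam j))"

lemma Pr_hom:
  assumes "\<phi> \<in> hom G G" "Pr b x"
  shows "Pr b (\<phi> x)"
proof -
  have x: "x \<in> carrier G" using assms(2) unfolding Pr_def by (rule conjunct1)
  have "\<phi> x \<in> carrier G" by (rule hom_in_carrier[OF assms(1) x])
  moreover have "\<exists>y\<in>carrier G. \<phi> x [^]\<^bsub>G\<^esub> (p ^ b j) = y [^]\<^bsub>G\<^esub> (p ^ lam j)" if j: "j \<in> {1..n}" for j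
  proof -
    obtain y where y: "y \<in> carrier G" "x [^]\<^bsub>G\<^esub> (p ^ b j) = y [^]\<^bsub>G\<^esub> (p ^ lam j)"
      using assms(2) j unfolding Pr_def by blast
    have "\<phi> x [^]\<^bsub>G\<^esub> (p ^ b j) = \<phi> (x [^]\<^bsub>G\<^esub> (p ^ b j))"
      using hom_nat_pow[OF assms(1) x grpG grpG] by simp
    also have "\<dots> = \<phi> (y [^]\<^bsub>G\<^esub> (p ^ lam j))" using y by simp
    also have "\<dots> = \<phi> y [^]\<^bsub>G\<^esub> (p ^ lam j)" using hom_nat_pow[OF assms(1) y(1) grpG grpG] by simp
    finally show ?thesis using hom_in_carrier[OF assms(1) y(1)] by blast
  qed
  ultimately show ?thesis unfolding Pr_def by blast
qed

lemma Pr_iso_rev: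
  assumes "\<phi> \<in> iso G G" "x \<in> carrier G" "Pr b (\<phi> x)"
  shows "Pr b x"
proof -
  have "inv_into (carrier G) \<phi> \<in> iso G G" using group.iso_set_sym[OF grpG assms(1)] .
  then have "Pr b (inv_into (carrier G) \<phi> (\<phi> x))" using Pr_hom[OF iso_imp_homomorphism assms(3)] by blast
  moreover have "inj_on \<phi> (carrier G)" using assms(1) unfolding iso_iff by blast
  ultimately show ?thesis using assms(2) by (simp add: inv_into_f_f)
qed

lemma Pr_char:
  assumes cb: "closed b" and bl: "\<forall>i\<in>{1..n}. b i \<le> lam i" and x: "x \<in> carrier G"
  shows "Pr b x \<longleftrightarrow> (\<forall>i\<in>{1..n}. M i dvd int p ^ b i * x i)"
proof
  assume "Pr b x"
  show "\<forall>i\<in>{1..n}. M i dvd int p ^ b i * x i"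
  proof
    fix i assume i: "i \<in> {1..n}"
    obtain y where y: "y \<in> carrier G" "x [^]\<^bsub>G\<^esub> (p ^ b i) = y [^]\<^bsub>G\<^esub> (p ^ lam i)"
      using \<open>Pr b x\<close> i unfolding Pr_def by blast
    have "(int (p ^ b i) * x i) mod M i = (int (p ^ lam i) * y i) mod M i"
      using fun_cong[OF y(2)[unfolded powG], of i] i by simp
    then show "M i dvd int p ^ b i * x i" by (simp add: dvd_eq_mod_eq_0)
  qed
next
  assume h: "\<forall>i\<in>{1..n}. M i dvd int p ^ b i * x i"
  have "\<exists>y\<in>carrier G. x [^]\<^bsub>G\<^esub> (p ^ b j) = y [^]\<^bsub>G\<^esub> (p ^ lam j)" if j: "j \<in> {1..n}" for j
  proof -
    define y where "y = (\<lambda>i\<in>{1..n}. if lam i \<le> lam j then 0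
                       else ((int p ^ b j * x i) div int p ^ lam j) mod M i)"
    have yc: "y \<in> carrier G" unfolding carrG y_def using p_pos by (auto simp: PiE_iff pos_mod_bound pos_mod_sign)
    have "(int p ^ b j * x i) mod M i = (int p ^ lam j * y i) mod M i" if i: "i \<in> {1..n}" for i
    proof -
      have xi: "int p ^ (lam i - b i) dvd x i" using h i dvd_pow_mult[OF pp] by blast
      have cij: "b i \<le> b j + (lam i - lam j)" using cb i j unfolding closed_def by blast
      show ?thesis
      proof (cases "lam i \<le> lam j")
        case True
        then have "lam i - b j \<le> lam i - b i" using cij by simp
        then have "int p ^ (lam i - b j) dvd x i" using xi le_imp_power_dvd dvd_trans by blast
        then have "M i dvd int p ^ b j * x i" using dvd_pow_mult[OF pp] by blast
        then show ?thesis using True i by (simp add: y_def dvd_eq_mod_eq_0)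
      next
        case False
        then have "lam j - b j \<le> lam i - b i" using cij bl i j by auto
        then have "int p ^ (lam j - b j) dvd x i" using xi le_imp_power_dvd dvd_trans by blast
        then have d: "int p ^ lam j dvd int p ^ b j * x i" using dvd_pow_mult[OF pp] by blast
        have "(int p ^ lam j * y i) mod M i = (int p ^ lam j * ((int p ^ b j * x i) div int p ^ lam j)) mod M i"
          using False i by (simp add: y_def mod_mult_right_eq)
        also have "\<dots> = (int p ^ b j * x i) mod M i" using d by simp
        finally show ?thesis by simp
      qed
    qed
    then have "x [^]\<^bsub>G\<^esub> (p ^ b j) = y [^]\<^bsub>G\<^esub> (p ^ lam j)"
      unfolding powG by (intro restrict_ext) simp
    then show ?thesis using yc by blast
  qed
  then show "Pr b x" unfolding Pr_def using x by blast
qed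

definition cl :: "(nat \<Rightarrow> nat) \<Rightarrow> nat \<Rightarrow> nat" where
  "cl a j = (if j \<in> {1..n} then Max ((\<lambda>i. a i - (lam i - lam j)) ` {1..n}) else 0)"

lemma cl_ge: "j \<in> {1..n} \<Longrightarrow> a j \<le> cl a j"
  unfolding cl_def by (auto intro!: Max_ge image_eqI[where x=j])

lemma cl_le_lam:
  assumes "\<forall>i\<in>{1..n}. a i \<le> lam i" "j \<in> {1..n}"
  shows "cl a j \<le> lam j"
proof -
  have "\<forall>i\<in>{1..n}. a i - (lam i - lam j) \<le> lam j" using assms(1) by auto
  moreover have "(\<lambda>i. a i - (lam i - lam j)) ` {1..n} \<noteq> {}" using assms(2) by blast
  ultimately show ?thesis unfolding cl_def using assms(2) by (simp add: Max_le_iff)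
qed

lemma cl_closed: "closed (cl a)"
  unfolding closed_def
proof (intro ballI)
  fix k j assume k: "k \<in> {1..n}" and j: "j \<in> {1..n}"
  have "cl a k \<in> (\<lambda>i. a i - (lam i - lam k)) ` {1..n}"
    unfolding cl_def using k by (auto intro!: Max_in)
  then obtain i where i: "i \<in> {1..n}" "cl a k = a i - (lam i - lam k)" by blast
  have "a i - (lam i - lam j) \<le> cl a j"
    unfolding cl_def using i j by (auto intro!: Max_ge)
  then show "cl a k \<le> cl a j + (lam k - lam j)" using i by linarith
qed

lemma cl_mono: "\<forall>i\<in>{1..n}. a i \<le> a' i \<Longrightarrow> cl a j \<le> cl a' j"
proof (cases "j \<in> {1..n}")
  case True
  assume h: "\<forall>i\<in>{1..n}. a i \<le> a' i"
  have "a i - (lam i - lam j) \<le> cl a' j" if "i \<in> {1..n}" for i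
  proof -
    have "a' i - (lam i - lam j) \<le> cl a' j" unfolding cl_def using True that by (auto intro!: Max_ge)
    moreover have "a i \<le> a' i" using h that by blast
    ultimately show ?thesis by linarith
  qed
  moreover have "(\<lambda>i. a i - (lam i - lam j)) ` {1..n} \<noteq> {}" using True by blast
  ultimately show ?thesis unfolding cl_def[of a] using True by (simp add: Max_le_iff)
qed (auto simp: cl_def)

lemma cl_closed_le:
  assumes "closed b"
  shows "cl b j \<le> b j"
proof (cases "j \<in> {1..n}")
  case True
  have "b i - (lam i - lam j) \<le> b j" if "i \<in> {1..n}" for i
  proof -
    have "b i \<le> b j + (lam i - lam j)" using assms True that unfolding closed_def by blast
    then show ?thesis by linarith
  qed
  then have "\<forall>i\<in>{1..n}. b i - (lam i - lam j) \<le> b j" by blast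
  moreover have "(\<lambda>i. b i - (lam i - lam j)) ` {1..n} \<noteq> {}" using True by blast
  ultimately show ?thesis unfolding cl_def using True by (simp add: Max_le_iff)
qed (auto simp: cl_def)

lemma lam_chain: "1 \<le> i \<Longrightarrow> i + d \<le> n \<Longrightarrow> lam i \<le> lam (i + d)"
proof (induction d)
  case (Suc d)
  then have "i + Suc d \<in> {2..n}" by auto
  then have "lam (i + Suc d - 1) \<le> lam (i + Suc d)" using lm by blast
  then have "lam (i + d) \<le> lam (i + Suc d)" by simp
  then show ?case using Suc by simp
qed simp

lemma lam_mono: "i \<in> {1..n} \<Longrightarrow> j \<in> {1..n} \<Longrightarrow> i \<le> j \<Longrightarrow> lam i \<le> lam j"
  using lam_chain[of i "j - i"] by simp

lemma canon_chain:
  assumes "canonical n lam b" "1 \<le> i" "i + d \<le> n"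
  shows "b i \<le> b (i + d) \<and> int (b (i+d)) - int (b i) \<le> int (lam (i+d)) - int (lam i)"
  using assms(3)
proof (induction d)
  case (Suc d)
  have "i + Suc d \<in> {2..n}" using Suc(2) assms(2) by auto
  then have "b (i + Suc d - 1) \<le> b (i + Suc d)" using assms(1) unfolding canonical_def by blast
  then have I: "b (i + d) \<le> b (i + Suc d)" by simp
  have II: "int (b (i + d + 1)) - int (b (i + d)) \<le> int (lam (i + d + 1)) - int (lam (i + d))"
    using assms(1,2) Suc(2) unfolding canonical_def by auto
  show ?case using Suc I II by auto
qed simp

lemma canon_closed: "canonical n lam b \<Longrightarrow> closed b"
  unfolding closed_def
proof (intro ballI)
  fix i j assume c: "canonical n lam b" and i: "i \<in> {1..n}" and j: "j \<in> {1..n}"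
  show "b i \<le> b j + (lam i - lam j)"
  proof (cases "i \<le> j")
    case True
    then show ?thesis using canon_chain[OF c, of i "j - i"] i j by auto
  next
    case False
    then have "int (b i) - int (b j) \<le> int (lam i) - int (lam j)" using canon_chain[OF c, of j "i - j"] i j by auto
    moreover have "lam j \<le> lam i" using lam_mono i j False by auto
    ultimately show ?thesis by linarith
  qed
qed

lemma closed_canon: "b \<in> Lam n lam \<Longrightarrow> closed b \<Longrightarrow> canonical n lam b"
  unfolding canonical_def
proof (intro conjI ballI)
  assume c: "closed b"
  fix i assume i: "i \<in> {2..n}"
  then have "i - 1 \<in> {1..n}" "i \<in> {1..n}" by auto
  then have "b (i - 1) \<le> b i + (lam (i - 1) - lam i)" using c unfolding closed_def by blast
  then show "b (i - 1) \<le> b i" using lm i by auto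
next
  assume c: "closed b"
  fix i assume i: "i \<in> {1..<n}"
  then have "i + 1 \<in> {1..n}" "i \<in> {1..n}" by auto
  then have "b (i + 1) \<le> b i + (lam (i + 1) - lam i)" using c unfolding closed_def by blast
  moreover have "lam i \<le> lam (i + 1)" using lam_mono[of i "i+1"] i by auto
  ultimately show "int (b (i + 1)) - int (b i) \<le> int (lam (i + 1)) - int (lam i)" by linarith
qed

end



lemma mod_shift:
  fixes m m' c u :: int
  assumes "m dvd c * m'"
  shows "(c * (u mod m')) mod m = (c * u) mod m"
proof -
  have e: "u mod m' = u - m' * (u div m')" by (simp add: minus_mult_div_eq_mod)
  have "c * (u mod m') - c * u = - ((c * m') * (u div m'))" unfolding e by (simp add: algebra_simps)
  then have "m dvd c * (u mod m') - c * u" using assms by simp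
  then show ?thesis by (simp add: mod_eq_dvd_iff)
qed

context pg begin

definition tv :: "int \<Rightarrow> nat \<Rightarrow> nat \<Rightarrow> (nat \<Rightarrow> int) \<Rightarrow> (nat \<Rightarrow> int)" where
  "tv c i j y = (\<lambda>k\<in>{1..n}. if k = j then (y j + c * y i) mod M j else y k)"

lemma tv_carrier: "j \<in> {1..n} \<Longrightarrow> y \<in> carrier G \<Longrightarrow> tv c i j y \<in> carrier G"
  unfolding carrG tv_def using p_pos by (auto simp: PiE_iff pos_mod_bound pos_mod_sign)

lemma tv_mult:
  assumes ij: "i \<in> {1..n}" "j \<in> {1..n}" "i \<noteq> j" and d: "M j dvd c * M i"
    and yz: "y \<in> carrier G" "z \<in> carrier G"
  shows "tv c i j (y \<otimes>\<^bsub>G\<^esub> z) = tv c i j y \<otimes>\<^bsub>G\<^esub> tv c i j z"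
  unfolding multG
proof (rule ext)
  fix k
  show "tv c i j (\<lambda>i\<in>{1..n}. (y i + z i) mod M i) k = (\<lambda>k\<in>{1..n}. (tv c i j y k + tv c i j z k) mod M k) k"
  proof (cases "k \<in> {1..n}")
    case False
    then show ?thesis unfolding tv_def by auto
  next
    case k: True
  show ?thesis
  proof (cases "k = j")
    case True
    have "tv c i j (\<lambda>i\<in>{1..n}. (y i + z i) mod M i) k
        = ((y j + z j) mod M j + c * ((y i + z i) mod M i)) mod M j"
      using True ij k by (simp add: tv_def)
    also have "\<dots> = ((y j + z j) + c * ((y i + z i) mod M i)) mod M j"
      by (simp add: mod_add_left_eq)
    also have "\<dots> = ((y j + z j) + (c * ((y i + z i) mod M i)) mod M j) mod M j"
      by (simp add: mod_add_right_eq)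
    also have "\<dots> = ((y j + z j) + (c * (y i + z i)) mod M j) mod M j"
      using mod_shift[OF d] by simp
    also have "\<dots> = ((y j + z j) + c * (y i + z i)) mod M j"
      by (simp add: mod_add_right_eq)
    also have "\<dots> = ((y j + c * y i) + (z j + c * z i)) mod M j"
      by (simp add: algebra_simps)
    also have "\<dots> = ((y j + c * y i) mod M j + (z j + c * z i) mod M j) mod M j"
      by (simp add: mod_add_eq)
    also have "\<dots> = (tv c i j y k + tv c i j z k) mod M k"
      using True ij by (simp add: tv_def)
    finally show ?thesis using k by simp
  next
    case False
    then show ?thesis using k by (simp add: tv_def)
  qed
  qed
qed

lemma tv_hom:
  assumes "i \<in> {1..n}" "j \<in> {1..n}" "i \<noteq> j" "M j dvd c * M i"
  shows "tv c i j \<in> hom G G"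
  unfolding hom_def
proof (intro CollectI conjI ballI funcsetI)
  fix x assume "x \<in> carrier G"
  then show "tv c i j x \<in> carrier G" using tv_carrier assms(2) by blast
next
  fix x y assume "x \<in> carrier G" "y \<in> carrier G"
  then show "tv c i j (x \<otimes>\<^bsub>G\<^esub> y) = tv c i j x \<otimes>\<^bsub>G\<^esub> tv c i j y"
    by (rule tv_mult[OF assms])
qed

lemma tv_inv:
  assumes ij: "i \<in> {1..n}" "j \<in> {1..n}" "i \<noteq> j" and y: "y \<in> carrier G"
  shows "tv (-c) i j (tv c i j y) = y"
proof
  fix k
  show "tv (-c) i j (tv c i j y) k = y k"
  proof (cases "k \<in> {1..n}")
    case False
    then have "y k = undefined" using PiE_arb[OF y[unfolded carrG]] by blast
    then show ?thesis using False unfolding tv_def by auto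
  next
    case k: True
    show ?thesis
    proof (cases "k = j")
      case True
      have yj: "y j \<in> {0..<M j}" using y ij unfolding carrG by auto
      have "tv (-c) i j (tv c i j y) k = ((y j + c * y i) mod M j + - c * y i) mod M j"
        using True ij by (simp add: tv_def)
      also have "\<dots> = (y j + c * y i + - c * y i) mod M j" by (simp add: mod_diff_left_eq)
      also have "\<dots> = y j" using yj by simp
      finally show ?thesis using True by simp
    next
      case False
      then show ?thesis using k by (simp add: tv_def)
    qed
  qed
qed

lemma tv_iso:
  assumes "i \<in> {1..n}" "j \<in> {1..n}" "i \<noteq> j" "M j dvd c * M i"
  shows "tv c i j \<in> iso G G"
  unfolding iso_def
proof (intro CollectI conjI)
  show "tv c i j \<in> hom G G" by (rule tv_hom[OF assms])
  show "bij_betw (tv c i j) (carrier G) (carrier G)"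
  proof (rule bij_betw_byWitness[where f'="tv (-c) i j"])
    show "\<forall>a\<in>carrier G. tv (- c) i j (tv c i j a) = a" using tv_inv assms by blast
    show "\<forall>a\<in>carrier G. tv c i j (tv (- c) i j a) = a" using tv_inv[OF assms(1-3), of _ "-c"] by simp
    show "tv c i j ` carrier G \<subseteq> carrier G" using tv_carrier assms(2) by blast
    show "tv (- c) i j ` carrier G \<subseteq> carrier G" using tv_carrier assms(2) by blast
  qed
qed

lemma Lam_le: "a \<in> Lam n lam \<Longrightarrow> i \<in> {1..n} \<Longrightarrow> a i \<le> lam i"
  unfolding Lam_def by blast

lemma Lam_out: "a \<in> Lam n lam \<Longrightarrow> i \<notin> {1..n} \<Longrightarrow> a i = 0"
  unfolding Lam_def by blast

lemma tv_type:
  assumes a: "a \<in> Lam n lam" and ij: "i \<in> {1..n}" "j \<in> {1..n}" "i \<noteq> j"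
    and x: "x \<in> gtype p n lam a" and e: "e = a i - (lam i - lam j)" and lt: "a j < e"
  shows "tv (int p ^ (lam j - lam i)) i j x \<in> gtype p n lam (a(j := e))"
proof -
  define t where "t = int p ^ (lam j - lam i)"
  have ai: "a i \<le> lam i" and aj: "a j \<le> lam j" using a ij Lam_le by auto
  have xc: "x \<in> carrier G" using x gtype_iff by blast
  have xi_iff: "\<forall>m::nat. M i dvd int m * x i \<longleftrightarrow> p ^ a i dvd m" using x ij gtype_iff by blast
  have Fi: "int p ^ (lam i - a i) dvd x i \<and> (0 < a i \<longrightarrow> \<not> int p ^ (lam i - a i + 1) dvd x i)"
    by (rule A_fwd[OF pp ai xi_iff])
  have ai0: "0 < a i" using lt e by linarith
  have xj: "int p ^ (lam j - a j) dvd x j" using gtype_kill[OF x ij(2)] dvd_pow_mult[OF pp] by blast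
  define s where "s = lam j - e"
  have s_eq: "s = (lam j - lam i) + (lam i - a i)" using ai ai0 lt e unfolding s_def by linarith
  have s1: "s + 1 \<le> lam j - a j" using lt e ai aj unfolding s_def by linarith
  have el: "e \<le> lam j" using e ai by linarith
  have e0: "0 < e" using lt by linarith
  have s1l: "s + 1 \<le> lam j" using s_def e0 el by linarith
  have d1: "int p ^ s dvd t * x i"
    unfolding s_eq t_def power_add using Fi by (simp add: mult_dvd_mono)
  have "s + 1 - (lam j - lam i) = lam i - a i + 1" using s_eq by simp
  then have d2: "\<not> int p ^ (s + 1) dvd t * x i"
    unfolding t_def using dvd_pow_mult[OF pp, of "s+1" "lam j - lam i" "x i"] Fi ai0 by simp
  have d3: "int p ^ (s + 1) dvd x j" using xj s1 le_imp_power_dvd dvd_trans by blast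
  have d3': "int p ^ s dvd x j" using d3 by (meson dvd_trans le_add1 le_imp_power_dvd)
  have w1: "int p ^ s dvd x j + t * x i" using d1 d3' by simp
  have w2: "\<not> int p ^ (s + 1) dvd x j + t * x i" using d2 d3 dvd_add_right_iff by blast
  have Ms: "int p ^ s dvd M j" "int p ^ (s+1) dvd M j" using s1l le_imp_power_dvd[of s "lam j"] le_imp_power_dvd[OF s1l] by auto
  define w where "w = (x j + t * x i) mod M j"
  have w1': "int p ^ (lam j - e) dvd w" using w1 Ms(1) unfolding w_def s_def by (simp add: dvd_mod_iff)
  have w2': "\<not> int p ^ (lam j - e + 1) dvd w" using w2 Ms(2) unfolding w_def s_def by (simp add: dvd_mod_iff)
  have wiff: "\<forall>m::nat. M j dvd int m * w \<longleftrightarrow> p ^ e dvd m"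
    using A_back[OF pp el w1'] w2' by blast
  show ?thesis unfolding gtype_iff
  proof (intro conjI ballI allI)
    show "tv (int p ^ (lam j - lam i)) i j x \<in> carrier G" using tv_carrier ij xc by blast
  next
    fix k and m :: nat assume k: "k \<in> {1..n}"
    show "M k dvd int m * tv (int p ^ (lam j - lam i)) i j x k \<longleftrightarrow> p ^ (a(j := e)) k dvd m"
    proof (cases "k = j")
      case True
      then show ?thesis using wiff k unfolding w_def t_def tv_def by simp
    next
      case False
      then show ?thesis using x k unfolding gtype_iff tv_def by simp
    qed
  qed
qed

lemma tv_dvd: "M j dvd int p ^ (lam j - lam i) * M i"
proof -
  have "lam j \<le> (lam j - lam i) + lam i" by simp
  then have "M j dvd int p ^ ((lam j - lam i) + lam i)" by (rule le_imp_power_dvd)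
  then show ?thesis by (simp add: power_add)
qed

end



context pg begin

lemma gtype_ne:
  assumes a: "a \<in> Lam n lam"
  shows "\<exists>x. x \<in> gtype p n lam a"
proof -
  define x where "x = (\<lambda>k\<in>{1..n}. if a k = 0 then 0 else int p ^ (lam k - a k))"
  have "x \<in> gtype p n lam a" unfolding gtype_iff
  proof (intro conjI ballI allI)
    have "int p ^ (lam k - a k) < int p ^ lam k" if "k \<in> {1..n}" "a k \<noteq> 0" for k
    proof -
      have "lam k - a k < lam k" using that a Lam_le by fastforce
      then show ?thesis using p_gt1 by (simp add: power_strict_increasing)
    qed
    then show "x \<in> carrier G" unfolding carrG x_def using p_pos by (auto simp: PiE_iff)
  next
    fix k and m :: nat assume k: "k \<in> {1..n}"
    have ak: "a k \<le> lam k" using a k Lam_le by blast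
    have d1: "int p ^ (lam k - a k) dvd x k" using k unfolding x_def by simp
    have d2: "0 < a k \<longrightarrow> \<not> int p ^ (lam k - a k + 1) dvd x k"
    proof
      assume "0 < a k"
      have "\<not> p ^ (lam k - a k + 1) dvd p ^ (lam k - a k)"
        using p_gt1 dvd_power_iff_le[of p "lam k - a k + 1" "lam k - a k"] by simp
      then have "\<not> int p ^ (lam k - a k + 1) dvd int p ^ (lam k - a k)"
        by (metis of_nat_dvd_iff of_nat_power)
      then show "\<not> int p ^ (lam k - a k + 1) dvd x k" using k \<open>0 < a k\<close> unfolding x_def by simp
    qed
    show "M k dvd int m * x k \<longleftrightarrow> p ^ a k dvd m" by (rule A_back[OF pp ak d1 d2])
  qed
  then show ?thesis by blast
qed

lemma cl_out: "j \<notin> {1..n} \<Longrightarrow> cl a j = 0"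
  unfolding cl_def by (rule if_not_P)

lemma cl_term: "i \<in> {1..n} \<Longrightarrow> j \<in> {1..n} \<Longrightarrow> a i - (lam i - lam j) \<le> cl a j"
  unfolding cl_def by (auto intro!: Max_ge)

lemma cl_Lam: "a \<in> Lam n lam \<Longrightarrow> cl a \<in> Lam n lam"
  unfolding Lam_def[of n lam] using cl_le_lam[of a] by (auto simp: cl_def[of a])

lemma closed_cl_eq:
  assumes "a \<in> Lam n lam" "closed a"
  shows "cl a = a"
proof
  fix j show "cl a j = a j"
  proof (cases "j \<in> {1..n}")
    case True
    then show ?thesis using cl_ge[OF True, of a] cl_closed_le[OF assms(2), of j] by simp
  next
    case False
    then show ?thesis using Lam_out[OF assms(1) False] by (simp add: cl_out)
  qed
qed

lemma exist:
  "a \<in> Lam n lam \<Longrightarrow> x \<in> gtype p n lam a \<Longrightarrow> \<exists>\<phi>\<in>iso G G. \<phi> x \<in> gtype p n lam (cl a)"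
proof (induction "\<Sum>k\<in>{1..n}. lam k - a k" arbitrary: a x rule: less_induct)
  case less
  note a = less.prems(1) and x = less.prems(2)
  show ?case
  proof (cases "closed a")
    case True
    then have "cl a = a" using closed_cl_eq a by blast
    then show ?thesis using x iso_set_refl by fastforce
  next
    case False
    then obtain i j where ij: "i \<in> {1..n}" "j \<in> {1..n}" "\<not> a i \<le> a j + (lam i - lam j)"
      unfolding closed_def by blast
    define e where "e = a i - (lam i - lam j)"
    have lt: "a j < e" using ij(3) unfolding e_def by linarith
    have inej: "i \<noteq> j" using ij(3) by auto
    have ai: "a i \<le> lam i" using a ij Lam_le by blast
    have el: "e \<le> lam j" using ai unfolding e_def by linarith
    define a' where "a' = a(j := e)"
    have a': "a' \<in> Lam n lam" using a el ij(2) unfolding a'_def Lam_def by auto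
    have "(\<Sum>k\<in>{1..n}. lam k - a' k) < (\<Sum>k\<in>{1..n}. lam k - a k)"
    proof (rule sum_strict_mono_ex1)
      show "finite {1..n}" by simp
      show "\<forall>k\<in>{1..n}. lam k - a' k \<le> lam k - a k" using lt unfolding a'_def by auto
      show "\<exists>k\<in>{1..n}. lam k - a' k < lam k - a k"
        using lt el ij(2) unfolding a'_def by (intro bexI[of _ j]) auto
    qed
    moreover have "tv (int p ^ (lam j - lam i)) i j x \<in> gtype p n lam a'"
      unfolding a'_def by (rule tv_type[OF a ij(1,2) inej x e_def lt])
    ultimately obtain \<phi> where phi: "\<phi> \<in> iso G G" "\<phi> (tv (int p ^ (lam j - lam i)) i j x) \<in> gtype p n lam (cl a')"
      using less.hyps a' by blast
    have psi: "tv (int p ^ (lam j - lam i)) i j \<in> iso G G" by (rule tv_iso[OF ij(1,2) inej tv_dvd])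
    have "cl a' = cl a"
    proof
      fix k
      have le1: "\<forall>m\<in>{1..n}. a m \<le> a' m" using lt unfolding a'_def by auto
      have le2: "\<forall>m\<in>{1..n}. a' m \<le> cl a m"
        using cl_ge cl_term[OF ij(1,2), of a] unfolding a'_def e_def by auto
      have "cl a k \<le> cl a' k" using cl_mono[OF le1] .
      moreover have "cl a' k \<le> cl (cl a) k" using cl_mono[OF le2] .
      moreover have "cl (cl a) k \<le> cl a k" using cl_closed_le[OF cl_closed] .
      ultimately show "cl a' k = cl a k" by simp
    qed
    then show ?thesis using phi psi iso_set_trans[OF psi phi(1)] by (intro bexI[of _ "\<phi> \<circ> tv (int p ^ (lam j - lam i)) i j"]) auto
  qed
qed

lemma kill_mono: "(m::int) dvd int p ^ a * z \<Longrightarrow> a \<le> b \<Longrightarrow> m dvd int p ^ b * z"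
proof -
  assume h: "m dvd int p ^ a * z" and ab: "a \<le> b"
  have "b = (b - a) + a" using ab by simp
  then have eq: "int p ^ b = int p ^ (b-a) * int p ^ a" by (metis power_add)
  then have "int p ^ b * z = int p ^ (b - a) * (int p ^ a * z)" by (simp add: mult.assoc)
  then show ?thesis using h by (metis dvd_mult)
qed

lemma uniq:
  assumes a: "a \<in> Lam n lam" and b: "canonical n lam b"
    and x: "x \<in> gtype p n lam a" and y: "y \<in> gtype p n lam b"
    and phi: "\<phi> \<in> iso G G" "\<phi> x = y"
  shows "b = cl a"
proof -
  have bL: "b \<in> Lam n lam" using b unfolding canonical_def by blast
  have cb: "closed b" using canon_closed[OF b] .
  have bl: "\<forall>i\<in>{1..n}. b i \<le> lam i" using bL Lam_le by blast
  have cal: "\<forall>i\<in>{1..n}. cl a i \<le> lam i" using cl_le_lam a Lam_le by blast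
  have xc: "x \<in> carrier G" and yc: "y \<in> carrier G" using x y gtype_iff by blast+
  have "Pr (cl a) x" unfolding Pr_char[OF cl_closed cal xc]
    using gtype_kill[OF x] kill_mono cl_ge by blast
  then have "Pr (cl a) y" using Pr_hom[OF iso_imp_homomorphism[OF phi(1)]] phi(2) by blast
  then have "\<forall>i\<in>{1..n}. M i dvd int p ^ cl a i * y i" using Pr_char[OF cl_closed cal yc] by blast
  then have le1: "\<forall>i\<in>{1..n}. b i \<le> cl a i" using gtype_le[OF y] by blast
  have "Pr b y" unfolding Pr_char[OF cb bl yc] using gtype_kill[OF y] by blast
  then have "Pr b x" using Pr_iso_rev[OF phi(1) xc] phi(2) by blast
  then have "\<forall>i\<in>{1..n}. M i dvd int p ^ b i * x i" using Pr_char[OF cb bl xc] by blast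
  then have le2: "\<forall>i\<in>{1..n}. a i \<le> b i" using gtype_le[OF x] by blast
  show ?thesis
  proof
    fix j show "b j = cl a j"
    proof (cases "j \<in> {1..n}")
      case True
      have "cl a j \<le> cl b j" using cl_mono[OF le2] .
      also have "\<dots> \<le> b j" using cl_closed_le[OF cb] .
      finally show ?thesis using le1 True by (simp add: antisym)
    next
      case False
      then show ?thesis using Lam_out[OF bL False] by (simp add: cl_out)
    qed
  qed
qed

lemma maxi:
  assumes a: "canonical n lam a" and b: "b \<in> Lam n lam" and sub: "gtype p n lam b \<subseteq> orb p n lam a"
  shows "tuple_le n b a"
proof -
  obtain z where z: "z \<in> gtype p n lam b" using gtype_ne[OF b] by blast
  then have "z \<in> orb p n lam a" using sub by blast
  then obtain x \<phi> where x: "x \<in> gtype p n lam a" and phi: "\<phi> \<in> iso G G" "\<phi> x = z"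
    unfolding orb_def automorphic_def by blast
  have aL: "a \<in> Lam n lam" using a unfolding canonical_def by blast
  have ca: "closed a" using canon_closed[OF a] .
  have al: "\<forall>i\<in>{1..n}. a i \<le> lam i" using aL Lam_le by blast
  have xc: "x \<in> carrier G" and zc: "z \<in> carrier G" using x z gtype_iff by blast+
  have "Pr a x" unfolding Pr_char[OF ca al xc] using gtype_kill[OF x] by blast
  then have "Pr a z" using Pr_hom[OF iso_imp_homomorphism[OF phi(1)]] phi(2) by blast
  then have "\<forall>i\<in>{1..n}. M i dvd int p ^ a i * z i" using Pr_char[OF ca al zc] by blast
  then show ?thesis unfolding tuple_le_def using gtype_le[OF z] by blast
qed

end

theorem mainTheorem2:
  fixes p n :: nat and lam :: "nat \<Rightarrow> nat"
  assumes "Factorial_Ring.prime p"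
    and "\<forall>i\<in>{2..n}. lam (i - 1) \<le> lam i"
  shows "(\<forall>a\<in>Lam n lam. \<exists>!b. canonical n lam b \<and> types_automorphic p n lam a b)
       \<and> (\<forall>a. canonical n lam a \<longrightarrow>
            a \<in> {b \<in> Lam n lam. gtype p n lam b \<subseteq> orb p n lam a}
          \<and> (\<forall>b \<in> {b \<in> Lam n lam. gtype p n lam b \<subseteq> orb p n lam a}. tuple_le n b a))"
proof -
  interpret pg p n lam using assms by unfold_locales
  have part1: "\<exists>!b. canonical n lam b \<and> types_automorphic p n lam a b" if a: "a \<in> Lam n lam" for a
  proof (rule ex1I[of _ "cl a"])
    have can: "canonical n lam (cl a)" by (rule closed_canon[OF cl_Lam[OF a] cl_closed])
    obtain x where x: "x \<in> gtype p n lam a" using gtype_ne[OF a] by blast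
    obtain \<phi> where "\<phi> \<in> iso G G" "\<phi> x \<in> gtype p n lam (cl a)" using exist[OF a x] by blast
    then have "types_automorphic p n lam a (cl a)"
      unfolding types_automorphic_def automorphic_def using x by blast
    then show "canonical n lam (cl a) \<and> types_automorphic p n lam a (cl a)" using can by blast
  next
    fix b assume "canonical n lam b \<and> types_automorphic p n lam a b"
    then obtain x y \<phi> where "canonical n lam b" "x \<in> gtype p n lam a" "y \<in> gtype p n lam b"
      "\<phi> \<in> iso G G" "\<phi> x = y"
      unfolding types_automorphic_def automorphic_def by blast
    then show "b = cl a" using uniq a by blast
  qed
  have part2: "a \<in> {b \<in> Lam n lam. gtype p n lam b \<subseteq> orb p n lam a}
          \<and> (\<forall>b \<in> {b \<in> Lam n lam. gtype p n lam b \<subseteq> orb p n lam a}. tuple_le n b a)"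
    if a: "canonical n lam a" for a
  proof (intro conjI ballI)
    have "gtype p n lam a \<subseteq> orb p n lam a"
      unfolding orb_def automorphic_def using iso_set_refl by fastforce
    then show "a \<in> {b \<in> Lam n lam. gtype p n lam b \<subseteq> orb p n lam a}"
      using a unfolding canonical_def by blast
  next
    fix b assume "b \<in> {b \<in> Lam n lam. gtype p n lam b \<subseteq> orb p n lam a}"
    then show "tuple_le n b a" using maxi[OF a] by blast
  qed
  show ?thesis using part1 part2 by blast
qed


end
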